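(* Let $n\ge 1$, let $I=\{1,\dots,n\}=I_\Sigma\cup I_{\max}$ be a partition into disjoint (possibly empty) index sets, and let $\gamma_{ij}\in\mathcal{K}_\infty\cup\{0\}$, $i,j\in I$, with $\gamma_{ii}\equiv 0$. Let $\Gamma:\mathbb{R}^n_+\to\mathbb{R}^n_+$, $D_\alpha$ and $\mu$ be as defined in the context. Assume that there exists $\alpha\in\mathcal{K}_\infty$ such that $\Gamma\circ D_\alpha(s)\not\geq s$ for all $s\in\mathbb{R}^n_+\setminus\{0\}$. Then there exists $\phi\in\mathcal{K}_\infty$ such that for all $w,v\in\mathbb{R}^n_+$ the inequality $w\le \mu(\Gamma(w),v)$ implies $\|w\|\le\phi(\|v\|)$.
   Context: $\mathbb{R}_+=[0,\infty)$, $\mathbb{R}^n_+=[0,\infty)^n$. For $x,y\in\mathbb{R}^n$: $x\ge y$ iff $x_i\ge y_i$ for all $i$; $x>y$ iff $x_i>y_i$ for all $i$; $x\not\ge y$ iff there is $i$ with $x_i<y_i$. $\|\cdot\|$ denotes a norm on $\mathbb{R}^n$. $\mathcal{K}$ is the class of continuous strictly increasing $\gamma:\mathbb{R}_+\to\mathbb{R}_+$ with $\gamma(0)=0$; $\mathcal{K}_\infty$ those in $\mathcal{K}$ that are unbounded; $\mathrm{id}$ is the identity. The operator $\Gamma(s)=(\Gamma_1(s),\dots,\Gamma_n(s))^T$ is defined by $\Gamma_i(s)=\gamma_{i1}(s_1)+\dots+\gamma_{in}(s_n)$ for $i\in I_\Sigma$ and $\Gamma_i(s)=\max\{\gamma_{i1}(s_1),\dots,\gamma_{in}(s_n)\}$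 for $i\in I_{\max}$. For $\alpha\in\mathcal{K}_\infty$, $D_\alpha(s)=(D_1(s_1),\dots,D_n(s_n))^T$ with $D_i=\mathrm{id}+\alpha$ for $i\in I_\Sigma$ and $D_i=\mathrm{id}$ for $i\in I_{\max}$. The map $\mu:\mathbb{R}^n_+\times\mathbb{R}^n_+\to\mathbb{R}^n_+$ is $\mu(w,v)=(\mu_1(w_1,v_1),\dots,\mu_n(w_n,v_n))^T$ with $\mu_i(a,b)=a+b$ for $i\in I_\Sigma$ and $\mu_i(a,b)=\max\{a,b\}$ for $i\in I_{\max}$. *)

theory Defs
  imports "HOL-Analysis.Analysis"
begin

definition class_K :: "(real \<Rightarrow> real) \<Rightarrow> bool" where
  "class_K g \<longleftrightarrow> continuous_on {0..} g \<and> strict_mono_on {0..} g \<and> g 0 = 0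
      \<and> (\<forall>t\<ge>0. g t \<ge> 0)"

definition class_K_inf :: "(real \<Rightarrow> real) \<Rightarrow> bool" where
  "class_K_inf g \<longleftrightarrow> class_K g \<and> (\<forall>M. \<exists>t\<ge>0. g t > M)"

definition is_norm :: "(real ^ 'n \<Rightarrow> real) \<Rightarrow> bool" where
  "is_norm N \<longleftrightarrow> (\<forall>x. N x \<ge> 0) \<and> (\<forall>x. N x = 0 \<longleftrightarrow> x = 0)
     \<and> (\<forall>c x. N (c *\<^sub>R x) = \<bar>c\<bar> * N x) \<and> (\<forall>x y. N (x + y) \<le> N x + N y)"

text \<open>The gain operator Gamma; indices in IS are of sum type, the rest of max type.\<close>
definition Gam :: "'n::finite set \<Rightarrow> ('n \<Rightarrow> 'n \<Rightarrow> real \<Rightarrow> real) \<Rightarrow> real ^ 'n \<Rightarrow> real ^ 'n" where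
  "Gam IS g s = (\<chi> i. if i \<in> IS then (\<Sum>j\<in>UNIV. g i j (s $ j))
                        else Max (range (\<lambda>j. g i j (s $ j))))"

definition Dalpha :: "'n::finite set \<Rightarrow> (real \<Rightarrow> real) \<Rightarrow> real ^ 'n \<Rightarrow> real ^ 'n" where
  "Dalpha IS \<alpha> s = (\<chi> i. if i \<in> IS then s $ i + \<alpha> (s $ i) else s $ i)"

definition mu :: "'n::finite set \<Rightarrow> real ^ 'n \<Rightarrow> real ^ 'n \<Rightarrow> real ^ 'n" where
  "mu IS w v = (\<chi> i. if i \<in> IS then w $ i + v $ i else max (w $ i) (v $ i))"

end

theory Submission
  imports Defs
begin


lemma norm_sum_le:
  assumes N: "is_norm N" and "finite A"
  shows "N (\<Sum>i\<in>A. f i) \<le> (\<Sum>i\<in>A. N (f i))"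
  using assms(2)
proof (induction A rule: finite_induct)
  case empty then show ?case using N unfolding is_norm_def by (metis order_refl sum.empty)
next
  case (insert x F)
  have "N (f x + sum f F) \<le> N (f x) + N (sum f F)" using N by (simp add: is_norm_def)
  with insert show ?case by simp
qed

lemma norm_upper:
  fixes N :: "real ^ 'n::finite \<Rightarrow> real"
  assumes N: "is_norm N"
  shows "N x \<le> (\<Sum>i\<in>UNIV. \<bar>x$i\<bar> * N (axis i 1))"
proof -
  have "N x = N (\<Sum>i\<in>UNIV. (x$i) *\<^sub>R axis i 1)"
    using basis_expansion[of x] by (simp add: scalar_mult_eq_scaleR)
  also have "\<dots> \<le> (\<Sum>i\<in>UNIV. N ((x$i) *\<^sub>R axis i 1))" by (rule norm_sum_le[OF N]) simp
  also have "\<dots> = (\<Sum>i\<in>UNIV. \<bar>x$i\<bar> * N (axis i 1))" using N by (simp add: is_norm_def)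
  finally show ?thesis .
qed

lemma norm_upper2:
  fixes N :: "real ^ 'n::finite \<Rightarrow> real"
  assumes N: "is_norm N"
  shows "N x \<le> norm x * (\<Sum>i\<in>UNIV. N (axis i 1))"
proof -
  have "N x \<le> (\<Sum>i\<in>UNIV. \<bar>x$i\<bar> * N (axis i 1))" by (rule norm_upper[OF N])
  also have "\<dots> \<le> (\<Sum>i\<in>UNIV. norm x * N (axis i 1))"
    by (rule sum_mono, rule mult_right_mono) (use N component_le_norm_cart in \<open>auto simp: is_norm_def\<close>)
  finally show ?thesis by (simp add: sum_distrib_left)
qed

lemma norm_lower:
  fixes N :: "real ^ 'n::finite \<Rightarrow> real"
  assumes N: "is_norm N"
  shows "\<exists>C>0. \<forall>x. norm x \<le> C * N x"
proof -
  define K where "K = (\<Sum>i\<in>UNIV. N (axis i 1))"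
  have K0: "K \<ge> 0" unfolding K_def using N by (simp add: is_norm_def sum_nonneg)
  have cont: "continuous_on (sphere 0 1) N"
    unfolding continuous_on_iff
  proof (intro ballI allI impI)
    fix x and e :: real assume "e > 0"
    show "\<exists>d>0. \<forall>x'\<in>sphere 0 1. dist x' x < d \<longrightarrow> dist (N x') (N x) < e"
    proof (intro exI[of _ "e / (K + 1)"] conjI ballI impI)
      show "e / (K+1) > 0" using \<open>e>0\<close> K0 by simp
      fix y assume "dist y x < e / (K+1)"
      have t1: "N y \<le> N x + N (y - x)" using N unfolding is_norm_def by (metis add.commute diff_add_cancel)
      have t2: "N x \<le> N y + N (x - y)" using N unfolding is_norm_def by (metis add.commute diff_add_cancel)
      have "N (x - y) = N (y - x)" using N unfolding is_norm_def
        by (metis abs_minus_cancel abs_one minus_diff_eq mult_1 scaleR_minus1_left)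
      moreover have "N (y - x) \<le> norm (y - x) * K" using norm_upper2[OF N] K_def by simp
      moreover have "norm (y - x) * K \<le> norm (y - x) * (K+1)" by (simp add: mult_left_mono)
      moreover have "norm (y - x) * (K+1) < e" using \<open>dist y x < e / (K+1)\<close> K0
        by (simp add: dist_norm pos_less_divide_eq)
      ultimately show "dist (N y) (N x) < e" using t1 t2 by (simp add: dist_real_def abs_less_iff)
    qed
  qed
  obtain i :: 'n where True by simp
  have ne: "sphere (0::real^'n) 1 \<noteq> {}" using norm_axis_1[of i] by (auto simp: sphere_def dist_norm intro!: exI[of _ "axis i 1"])
  obtain x0 where x0: "x0 \<in> sphere 0 1" "\<forall>y\<in>sphere 0 1. N x0 \<le> N y"
    using continuous_attains_inf[OF compact_sphere ne cont] by blast
  have m0: "N x0 > 0" using N x0(1) unfolding is_norm_def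
    by (metis dist_0_norm mem_sphere order_le_less zero_neq_one norm_zero)
  show ?thesis
  proof (intro exI[of _ "1 / N x0"] conjI allI)
    show "1 / N x0 > 0" using m0 by simp
    fix x :: "real^'n"
    show "norm x \<le> 1 / N x0 * N x"
    proof (cases "x = 0")
      case True then show ?thesis using N by (simp add: is_norm_def)
    next
      case False
      then have nx: "norm x > 0" by simp
      have "(1 / norm x) *\<^sub>R x \<in> sphere 0 1" using nx by (simp add: sphere_def dist_norm)
      then have "N x0 \<le> N ((1 / norm x) *\<^sub>R x)" using x0 by blast
      also have "\<dots> = N x / norm x" using N nx unfolding is_norm_def by simp
      finally have "N x0 * norm x \<le> N x" using nx by (simp add: pos_le_divide_eq)
      then show ?thesis using m0 by (simp add: field_simps)
    qed
  qed
qed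



lemma Kinf_surj:
  assumes a: "class_K_inf a" and y: "y \<ge> 0"
  shows "\<exists>x\<ge>0. a x = y"
proof -
  from a obtain T where T: "T \<ge> 0" "a T > y" unfolding class_K_inf_def by blast
  have c: "continuous_on {0..T} a" using a unfolding class_K_inf_def class_K_def
    by (auto intro: continuous_on_subset)
  have "a 0 = 0" using a unfolding class_K_inf_def class_K_def by auto
  then obtain x where "0 \<le> x" "x \<le> T" "a x = y" using IVT'[of a 0 y T, OF _ _ T(1) c] y T by auto
  then show ?thesis by auto
qed

lemma Kinf_inverse:
  assumes a: "class_K_inf a"
  shows "\<exists>b. continuous_on {0..} b \<and> b 0 = 0 \<and> (\<forall>x\<ge>0. 0 \<le> b x)
     \<and> (\<forall>x y. x \<le> y \<longrightarrow> b x \<le> b y) \<and> (\<forall>s X. 0 \<le> s \<longrightarrow> a s < X \<longrightarrow> s < b X)"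
proof -
  have smo: "strict_mono_on {0..} a" and a0: "a 0 = 0" and ann: "\<forall>t\<ge>0. a t \<ge> 0"
    using a unfolding class_K_inf_def class_K_def by auto
  define a' where "a' x = (if 0 \<le> x then a x else x)" for x
  have sm: "a' x < a' y" if "x < y" for x y
  proof (cases "0 \<le> x")
    case True then have "a x < a y" using that strict_mono_onD[OF smo, of x y] by auto
    then show ?thesis using True that unfolding a'_def by auto
  next
    case False
    show ?thesis
    proof (cases "0 \<le> y")
      case True then show ?thesis using False ann unfolding a'_def by force
    next
      case False2: False then show ?thesis using False that unfolding a'_def by simp
    qed
  qed
  have mo: "a' x \<le> a' y" if "x \<le> y" for x y using sm[of x y] that by (cases "x = y") auto
  have inj: "inj a'"
  proof (rule injI)
    fix x y assume "a' x = a' y" then show "x = y" using sm[of x y] sm[of y x] by (cases x y rule: linorder_cases) auto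
  qed
  have surj: "surj a'"
  proof -
    have "\<exists>x. a' x = y" for y
    proof (cases "0 \<le> y")
      case True then obtain x where "x \<ge> 0" "a x = y" using Kinf_surj[OF a] by blast
      then show ?thesis unfolding a'_def by auto
    next
      case False then show ?thesis unfolding a'_def by (intro exI[of _ y]) auto
    qed
    then show ?thesis by (metis surjI)
  qed
  define b where "b = inv a'"
  have ab: "a' (b y) = y" for y unfolding b_def by (simp add: surj surj_f_inv_f)
  have ba: "b (a' x) = x" for x unfolding b_def by (simp add: inj)
  have bmo: "b x \<le> b y" if "x \<le> y" for x y
  proof (rule ccontr)
    assume "\<not> b x \<le> b y" then have "a' (b y) < a' (b x)" by (intro sm) simp
    then show False using that ab by simp
  qed
  have "continuous_on UNIV b"
  proof (rule continuous_onI_mono)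
    have "range b = UNIV" by (metis ba surjI)
    then show "open (range b)" by simp
  qed (use bmo in auto)
  then have "continuous_on {0..} b" by (rule continuous_on_subset) simp
  moreover have "b 0 = 0" using ba[of 0] a0 unfolding a'_def by simp
  moreover have "\<forall>x\<ge>0. 0 \<le> b x" using bmo \<open>b 0 = 0\<close> by metis
  moreover have "\<forall>s X. 0 \<le> s \<longrightarrow> a s < X \<longrightarrow> s < b X"
  proof (intro allI impI)
    fix s X assume "0 \<le> s" "a s < X"
    show "s < b X"
    proof (rule ccontr)
      assume "\<not> s < b X" then have "a' (b X) \<le> a' s" by (intro mo) simp
      then show False using \<open>a s < X\<close> \<open>0 \<le> s\<close> ab unfolding a'_def by auto
    qed
  qed
  ultimately show ?thesis using bmo by blast
qed



primrec cc :: "(real \<Rightarrow> real) \<Rightarrow> (real \<Rightarrow> real) \<Rightarrow> nat \<Rightarrow> real \<Rightarrow> real" where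
  "cc b G 0 r = 0"
| "cc b G (Suc k) r = b (G (cc b G k r) + r) + G (cc b G k r) + r"

lemma cc_props:
  assumes bmo: "\<And>x y. x \<le> y \<Longrightarrow> b x \<le> b y" and b0: "b 0 = 0"
    and Gmo: "\<And>x y. 0 \<le> x \<Longrightarrow> x \<le> y \<Longrightarrow> G x \<le> G y" and G0: "G 0 = 0"
    and bc: "continuous_on {0..} b" and Gc: "continuous_on {0..} G"
  shows "(\<forall>r\<ge>0. 0 \<le> cc b G k r) \<and> cc b G k 0 = 0
     \<and> (\<forall>r r'. 0 \<le> r \<longrightarrow> r \<le> r' \<longrightarrow> cc b G k r \<le> cc b G k r')
     \<and> (\<forall>r\<ge>0. cc b G k r \<le> cc b G (Suc k) r)
     \<and> continuous_on {0..} (cc b G k)"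
proof (induction k)
  case 0
  have "G 0 + r \<ge> 0" if "r \<ge> 0" for r using G0 that by simp
  then show ?case using bmo[of 0] b0 G0 by (auto intro: add_nonneg_nonneg)
next
  case (Suc k)
  from Suc.IH have nn: "\<And>r. r \<ge> 0 \<Longrightarrow> 0 \<le> cc b G k r" and z: "cc b G k 0 = 0"
    and mo: "\<And>r r'. 0 \<le> r \<Longrightarrow> r \<le> r' \<Longrightarrow> cc b G k r \<le> cc b G k r'"
    and inc: "\<And>r. r \<ge> 0 \<Longrightarrow> cc b G k r \<le> cc b G (Suc k) r"
    and co: "continuous_on {0..} (cc b G k)" by blast+
  have Gnn: "G x \<ge> 0" if "x \<ge> 0" for x using Gmo[of 0 x] that G0 by simp
  have bnn: "b x \<ge> 0" if "x \<ge> 0" for x using bmo[of 0 x] that b0 by simp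
  have nn': "0 \<le> cc b G (Suc k) r" if "r \<ge> 0" for r
    using nn[OF that] Gnn bnn that by simp
  have z': "cc b G (Suc k) 0 = 0" using z G0 b0 by simp
  have mo': "cc b G (Suc k) r \<le> cc b G (Suc k) r'" if "0 \<le> r" "r \<le> r'" for r r'
  proof -
    have "G (cc b G k r) \<le> G (cc b G k r')" using Gmo nn mo that by blast
    then show ?thesis using bmo[of "G (cc b G k r) + r" "G (cc b G k r') + r'"] that by simp
  qed
  have inc': "cc b G (Suc k) r \<le> cc b G (Suc (Suc k)) r" if "r \<ge> 0" for r
  proof -
    have "G (cc b G k r) \<le> G (cc b G (Suc k) r)" using Gmo nn inc that by blast
    then have "b (G (cc b G k r) + r) \<le> b (G (cc b G (Suc k) r) + r)" using bmo by simp
    then show ?thesis using \<open>G (cc b G k r) \<le> G (cc b G (Suc k) r)\<close>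
      by simp
  qed
  have c1: "continuous_on {0..} (\<lambda>r. G (cc b G k r))"
    by (rule continuous_on_compose2[OF Gc co]) (auto intro: nn)
  have c2: "continuous_on {0..} (\<lambda>r. G (cc b G k r) + r)"
    by (intro continuous_intros c1)
  have c3: "continuous_on {0..} (\<lambda>r. b (G (cc b G k r) + r))"
    by (rule continuous_on_compose2[OF bc c2]) (auto simp: Gnn nn)
  have "continuous_on {0..} (\<lambda>r. b (G (cc b G k r) + r) + G (cc b G k r) + r)"
    by (intro continuous_intros c1 c3)
  then have co': "continuous_on {0..} (cc b G (Suc k))" by simp
  show ?case using nn' z' mo' inc' co' by blast
qed



lemma step:
  fixes IS :: "'n::finite set" and g :: "'n \<Rightarrow> 'n \<Rightarrow> real \<Rightarrow> real"
    and w v :: "real ^ 'n"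
  assumes gm: "\<And>i j x y. 0 \<le> x \<Longrightarrow> x \<le> y \<Longrightarrow> g i j x \<le> g i j y"
    and gnn: "\<And>i j x. 0 \<le> x \<Longrightarrow> 0 \<le> g i j x" and g0: "\<And>i j. g i j 0 = 0"
    and a: "class_K_inf a"
    and sg: "\<forall>s::real ^ 'n. (\<forall>i. 0 \<le> s $ i) \<and> s \<noteq> 0 \<longrightarrow>
              (\<exists>i. Gam IS g (Dalpha IS a s) $ i < s $ i)"
    and bp: "\<And>s X. 0 \<le> s \<Longrightarrow> a s < X \<Longrightarrow> s < b X"
    and bnn: "\<And>x. 0 \<le> x \<Longrightarrow> 0 \<le> b x"
    and w0: "\<And>i. 0 \<le> w $ i" and v0: "\<And>i. 0 \<le> v $ i" and vr: "\<And>i. v $ i \<le> r"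
    and hyp: "\<And>i. w $ i \<le> mu IS (Gam IS g w) v $ i"
    and Rc: "\<And>j. j \<in> R \<Longrightarrow> w $ j \<le> c" and c0: "0 \<le> c"
    and nz: "\<exists>j. j \<notin> R \<and> w $ j \<noteq> 0"
    and Gdef: "G = (\<lambda>t. \<Sum>i\<in>UNIV. \<Sum>j\<in>UNIV. g i j t)"
  shows "\<exists>i. i \<notin> R \<and> w $ i \<le> b (G c + r) + G c + r"
proof -
  have a0: "a 0 = 0" and ann: "\<And>t. t \<ge> 0 \<Longrightarrow> a t \<ge> 0" and ac: "continuous_on {0..} a"
    using a unfolding class_K_inf_def class_K_def by auto
  have r0: "0 \<le> r" using v0 vr order_trans by blast
  define wJ where "wJ = (\<chi> j. if j \<in> R then 0 else w $ j)"
  have wJ0: "0 \<le> wJ $ j" for j using w0 unfolding wJ_def by simp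
  have ex: "\<exists>x\<ge>0. x + a x = y" if y0: "y \<ge> 0" for y
  proof -
    have "continuous_on {0..y} (\<lambda>x. x + a x)"
      by (intro continuous_intros) (rule continuous_on_subset[OF ac], auto)
    then obtain x where "0 \<le> x" "x \<le> y" "x + a x = y"
      using IVT'[of "\<lambda>x. x + a x" 0 y y] y0 a0 ann[of y] by auto
    then show ?thesis by auto
  qed
  obtain f where f: "\<And>j. 0 \<le> f j \<and> f j + a (f j) = wJ $ j"
    using ex[OF wJ0] by metis
  have fz: "f j = 0" if "wJ $ j = 0" for j
    using f[of j] ann[of "f j"] that by linarith
  define s where "s = (\<chi> j. if j \<in> IS then f j else wJ $ j)"
  have s0: "\<forall>i. 0 \<le> s $ i" using f wJ0 unfolding s_def by simp
  have Ds: "Dalpha IS a s = wJ" unfolding Dalpha_def s_def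
    by (simp add: vec_eq_iff f)
  have snz: "s \<noteq> 0"
  proof
    assume "s = 0"
    obtain j where j: "j \<notin> R" "w $ j \<noteq> 0" using nz by blast
    then have "wJ $ j \<noteq> 0" unfolding wJ_def by simp
    moreover have "s $ j = 0" using \<open>s = 0\<close> by simp
    ultimately show False using f[of j] a0 unfolding s_def by (cases "j \<in> IS") auto
  qed
  obtain i where i: "Gam IS g wJ $ i < s $ i" using sg s0 snz Ds by metis
  have Gamnn: "0 \<le> Gam IS g wJ $ i"
  proof (cases "i \<in> IS")
    case True then show ?thesis unfolding Gam_def using gnn wJ0 by (simp add: sum_nonneg)
  next
    case False
    have "g i i (wJ $ i) \<le> Max (range (\<lambda>j. g i j (wJ $ j)))" by (rule Max_ge) auto
    moreover have "0 \<le> g i i (wJ $ i)" using gnn wJ0 by blast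
    ultimately have "0 \<le> Max (range (\<lambda>j. g i j (wJ $ j)))" by linarith
    then show ?thesis unfolding Gam_def using False by simp
  qed
  have iR: "i \<notin> R"
  proof
    assume "i \<in> R"
    then have "wJ $ i = 0" unfolding wJ_def by simp
    then have "s $ i = 0" using fz unfolding s_def by simp
    then show False using i Gamnn by simp
  qed
  have wi: "wJ $ i = w $ i" using iR unfolding wJ_def by simp
  have gleG: "g i j c \<le> G c" for j
  proof -
    have "g i j c \<le> (\<Sum>j'\<in>UNIV. g i j' c)" by (rule member_le_sum) (auto intro: gnn c0)
    also have "\<dots> \<le> G c" unfolding Gdef by (rule member_le_sum) (auto intro!: sum_nonneg gnn c0)
    finally show ?thesis .
  qed
  have pj: "g i j (w $ j) \<le> g i j (wJ $ j) + (if j \<in> R then g i j c else 0)" for j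
    using gm[OF w0 Rc, of j i j] unfolding wJ_def by (simp add: g0)
  have Gc0: "0 \<le> G c" using gleG[of i] gnn[OF c0, of i i] by linarith
  show ?thesis
  proof (cases "i \<in> IS")
    case True
    have "Gam IS g w $ i = (\<Sum>j\<in>UNIV. g i j (w $ j))" unfolding Gam_def using True by simp
    also have "\<dots> \<le> (\<Sum>j\<in>UNIV. g i j (wJ $ j) + (if j \<in> R then g i j c else 0))"
      by (rule sum_mono) (rule pj)
    also have "\<dots> = Gam IS g wJ $ i + (\<Sum>j\<in>UNIV. (if j \<in> R then g i j c else 0))"
      unfolding Gam_def using True by (simp add: sum.distrib)
    also have "(\<Sum>j\<in>UNIV. (if j \<in> R then g i j c else 0)) \<le> (\<Sum>j\<in>UNIV. g i j c)"
      by (rule sum_mono) (auto intro: gnn c0)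
    also have "(\<Sum>j\<in>UNIV. g i j c) \<le> G c" unfolding Gdef by (rule member_le_sum) (auto intro!: sum_nonneg gnn c0)
    finally have GG: "Gam IS g w $ i \<le> Gam IS g wJ $ i + G c" by simp
    have "w $ i \<le> Gam IS g w $ i + v $ i" using hyp[of i] True unfolding mu_def by simp
    then have "w $ i < f i + G c + r" using GG i vr[of i] True unfolding s_def by simp
    moreover have "f i + a (f i) = w $ i" using f[of i] wi by simp
    ultimately have "a (f i) < G c + r" by simp
    then have "f i < b (G c + r)" using bp f by blast
    then show ?thesis using iR \<open>f i + a (f i) = w $ i\<close> \<open>a (f i) < G c + r\<close> by (intro exI[of _ i]) simp
  next
    case False
    have GG: "Gam IS g w $ i \<le> max (Gam IS g wJ $ i) (G c)"
    proof -
      have "Max (range (\<lambda>j. g i j (w $ j))) \<le> max (Max (range (\<lambda>j. g i j (wJ $ j)))) (G c)"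
      proof (rule Max.boundedI)
        fix y assume "y \<in> range (\<lambda>j. g i j (w $ j))"
        then obtain j where y: "y = g i j (w $ j)" by auto
        show "y \<le> max (Max (range (\<lambda>j. g i j (wJ $ j)))) (G c)"
        proof (cases "j \<in> R")
          case True then show ?thesis using y pj[of j] gleG[of j] g0 unfolding wJ_def by simp
        next
          case False
          have "g i j (wJ $ j) \<le> Max (range (\<lambda>j. g i j (wJ $ j)))" by (rule Max_ge) auto
          then show ?thesis using y False unfolding wJ_def by simp
        qed
      qed auto
      then show ?thesis unfolding Gam_def using False by simp
    qed
    have "w $ i \<le> max (Gam IS g w $ i) (v $ i)" using hyp[of i] False unfolding mu_def by simp
    moreover have "Gam IS g wJ $ i < w $ i" using i False wi unfolding s_def by simp
    ultimately have "w $ i \<le> G c + r" using GG vr[of i] Gc0 r0 by linarith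
    then show ?thesis using iR bnn[of "G c + r"] Gc0 r0 by (intro exI[of _ i]) simp
  qed
qed


theorem lemma2:
  fixes IS :: "'n::finite set"
    and g :: "'n \<Rightarrow> 'n \<Rightarrow> real \<Rightarrow> real"
    and N :: "real ^ 'n \<Rightarrow> real"
  assumes N: "is_norm N"
    and g_class: "\<And>i j. class_K_inf (g i j) \<or> (\<forall>t\<ge>0. g i j t = 0)"
    and g_diag: "\<And>i t. t \<ge> 0 \<Longrightarrow> g i i t = 0"
    and small_gain: "\<exists>\<alpha>. class_K_inf \<alpha> \<and>
          (\<forall>s::real ^ 'n. (\<forall>i. 0 \<le> s $ i) \<and> s \<noteq> 0 \<longrightarrow>
              (\<exists>i. Gam IS g (Dalpha IS \<alpha> s) $ i < s $ i))"
  shows "\<exists>\<phi>. class_K_inf \<phi> \<and>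
          (\<forall>w v :: real ^ 'n. (\<forall>i. 0 \<le> w $ i) \<and> (\<forall>i. 0 \<le> v $ i) \<and>
              (\<forall>i. w $ i \<le> mu IS (Gam IS g w) v $ i) \<longrightarrow> N w \<le> \<phi> (N v))"
proof -
  obtain a where a: "class_K_inf a" and sg: "\<forall>s::real ^ 'n. (\<forall>i. 0 \<le> s $ i) \<and> s \<noteq> 0 \<longrightarrow>
              (\<exists>i. Gam IS g (Dalpha IS a s) $ i < s $ i)" using small_gain by blast
  have gm: "g i j x \<le> g i j y" if "0 \<le> x" "x \<le> y" for i j x y
  proof (cases "class_K_inf (g i j)")
    case True
    then have "strict_mono_on {0..} (g i j)" unfolding class_K_inf_def class_K_def by auto
    then show ?thesis using strict_mono_on_leD that by fastforce
  next
    case False then show ?thesis using g_class[of i j] that by auto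
  qed
  have g0: "g i j 0 = 0" for i j using g_class[of i j] unfolding class_K_inf_def class_K_def by auto
  have gnn: "0 \<le> g i j x" if "0 \<le> x" for i j x using gm[of 0 x i j] g0 that by simp
  have gc: "continuous_on {0..} (g i j)" for i j
  proof (cases "class_K_inf (g i j)")
    case True then show ?thesis unfolding class_K_inf_def class_K_def by auto
  next
    case False
    then have "\<forall>t\<in>{0..}. g i j t = 0" using g_class[of i j] by auto
    then show ?thesis using continuous_on_cong[of "{0..}" "{0..}" "g i j" "\<lambda>_. 0"] continuous_on_const by auto
  qed
  define G where "G = (\<lambda>t. \<Sum>i\<in>UNIV. \<Sum>j\<in>UNIV. g i j (t::real))"
  have Gmo: "G x \<le> G y" if "0 \<le> x" "x \<le> y" for x y
    unfolding G_def by (intro sum_mono gm that)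
  have G0: "G 0 = 0" unfolding G_def by (simp add: g0)
  have Gc: "continuous_on {0..} G" unfolding G_def by (intro continuous_on_sum gc)
  obtain b where bc: "continuous_on {0..} b" and b0: "b 0 = 0" and bnn: "\<forall>x\<ge>0. 0 \<le> b x"
     and bmo: "\<forall>x y. x \<le> y \<longrightarrow> b x \<le> b y" and bp: "\<forall>s X. 0 \<le> s \<longrightarrow> a s < X \<longrightarrow> s < b X"
    using Kinf_inverse[OF a] by blast
  have ccp: "(\<forall>r\<ge>0. 0 \<le> cc b G k r) \<and> cc b G k 0 = 0
     \<and> (\<forall>r r'. 0 \<le> r \<longrightarrow> r \<le> r' \<longrightarrow> cc b G k r \<le> cc b G k r')
     \<and> (\<forall>r\<ge>0. cc b G k r \<le> cc b G (Suc k) r)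
     \<and> continuous_on {0..} (cc b G k)" for k
    by (rule cc_props) (use bmo b0 Gmo G0 bc Gc in auto)
  define n where "n = CARD('n)"
  have bound: "\<forall>j. w $ j \<le> cc b G n r"
    if w0: "\<And>i. 0 \<le> w $ i" and v0: "\<And>i. 0 \<le> v $ i" and vr: "\<And>i. v $ i \<le> r"
      and hyp: "\<And>i. w $ i \<le> mu IS (Gam IS g w) v $ i" for w v :: "real^'n" and r
  proof -
    have r0: "0 \<le> r" using v0 vr order_trans by blast
    have it: "\<exists>R. (k \<le> card R \<or> (\<forall>j. j \<notin> R \<longrightarrow> w $ j = 0)) \<and> (\<forall>j\<in>R. w $ j \<le> cc b G k r)" for k
    proof (induction k)
      case 0 then show ?case by (intro exI[of _ "{}"]) simp
    next
      case (Suc k)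
      then obtain R where R: "k \<le> card R \<or> (\<forall>j. j \<notin> R \<longrightarrow> w $ j = 0)" "\<forall>j\<in>R. w $ j \<le> cc b G k r"
        by blast
      have inc: "cc b G k r \<le> cc b G (Suc k) r" using ccp r0 by blast
      show ?case
      proof (cases "\<forall>j. j \<notin> R \<longrightarrow> w $ j = 0")
        case True then show ?thesis using R(2) inc by (intro exI[of _ R]) auto
      next
        case False
        have c0: "0 \<le> cc b G k r" using ccp r0 by blast
        obtain i where i: "i \<notin> R" "w $ i \<le> b (G (cc b G k r) + r) + G (cc b G k r) + r"
          using step[of g a IS b w v r R "cc b G k r" G, OF gm gnn g0 a sg _ _ w0 v0 vr hyp _ c0 _ G_def]
            bp bnn R(2) False by blast
        have "Suc k \<le> card (insert i R)" using R(1) False i(1) by simp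
        moreover have "\<forall>j\<in>insert i R. w $ j \<le> cc b G (Suc k) r" using i R(2) inc by auto
        ultimately show ?thesis by blast
      qed
    qed
    obtain R where R: "n \<le> card R \<or> (\<forall>j. j \<notin> R \<longrightarrow> w $ j = 0)" "\<forall>j\<in>R. w $ j \<le> cc b G n r"
      using it by blast
    show ?thesis
    proof
      fix j
      show "w $ j \<le> cc b G n r"
      proof (cases "j \<in> R")
        case True then show ?thesis using R(2) by blast
      next
        case False
        have "R \<noteq> UNIV" using False by blast
        then have "\<not> n \<le> card R" unfolding n_def using card_seteq[of UNIV R] by auto
        then have "w $ j = 0" using R(1) False by blast
        then show ?thesis using ccp r0 by simp
      qed
    qed
  qed
  obtain C1 where C1: "C1 > 0" "\<forall>x. norm x \<le> C1 * N x" using norm_lower[OF N] by blast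
  define K where "K = (\<Sum>i\<in>UNIV. N (axis i (1::real)) :: real)"
  have K0: "K \<ge> 0" unfolding K_def using N by (simp add: is_norm_def sum_nonneg)
  define \<phi> where "\<phi> t = K * cc b G n (C1 * t) + t" for t
  have Nnn: "0 \<le> N x" for x using N by (simp add: is_norm_def)
  have phiK: "class_K_inf \<phi>"
    unfolding class_K_inf_def class_K_def
  proof (intro conjI allI impI)
    have "continuous_on {0..} (\<lambda>t. cc b G n (C1 * t))"
      by (rule continuous_on_compose2[of "{0..}" "cc b G n"]) (use ccp C1 in \<open>auto intro!: continuous_intros\<close>)
    then show "continuous_on {0..} \<phi>" unfolding \<phi>_def by (intro continuous_intros)
    show "strict_mono_on {0..} \<phi>"
    proof (rule strict_mono_onI)
      fix x y :: real assume "x \<in> {0..}" "y \<in> {0..}" "x < y"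
      then have "cc b G n (C1 * x) \<le> cc b G n (C1 * y)" using ccp C1 by simp
      then have "K * cc b G n (C1 * x) \<le> K * cc b G n (C1 * y)" using K0 by (rule mult_left_mono)
      then show "\<phi> x < \<phi> y" unfolding \<phi>_def using \<open>x < y\<close> by simp
    qed
    show "\<phi> 0 = 0" unfolding \<phi>_def using ccp by simp
    fix t :: real assume "0 \<le> t"
    then show "0 \<le> \<phi> t" unfolding \<phi>_def using ccp C1 K0 by simp
  next
    fix M
    have "0 \<le> cc b G n (C1 * (max 0 M + 1))" using ccp C1 by simp
    then have "0 \<le> K * cc b G n (C1 * (max 0 M + 1))" using K0 by simp
    then have "\<phi> (max 0 M + 1) > M" unfolding \<phi>_def by linarith
    then show "\<exists>t\<ge>0. M < \<phi> t" by (intro exI[of _ "max 0 M + 1"]) simp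
  qed
  show ?thesis
  proof (intro exI[of _ \<phi>] conjI phiK allI impI)
    fix w v :: "real^'n"
    assume H: "(\<forall>i. 0 \<le> w $ i) \<and> (\<forall>i. 0 \<le> v $ i) \<and> (\<forall>i. w $ i \<le> mu IS (Gam IS g w) v $ i)"
    define r where "r = C1 * N v"
    have vr: "v $ i \<le> r" for i
      using component_le_norm_cart[of v i] C1(2) unfolding r_def by (metis abs_ge_self order_trans)
    have wb: "\<forall>j. w $ j \<le> cc b G n r" using bound[of w v r] H vr by blast
    have "N w \<le> (\<Sum>i\<in>UNIV. \<bar>w$i\<bar> * N (axis i 1))" by (rule norm_upper[OF N])
    also have "\<dots> \<le> (\<Sum>i\<in>UNIV. cc b G n r * N (axis i 1))"
      by (rule sum_mono, rule mult_right_mono) (use H wb Nnn in auto)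
    also have "\<dots> = K * cc b G n r" unfolding K_def by (simp add: sum_distrib_left mult.commute)
    also have "\<dots> \<le> \<phi> (N v)" unfolding \<phi>_def r_def using Nnn[of v] by simp
    finally show "N w \<le> \<phi> (N v)" .
  qed
qed

end
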